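(* Let $X$ be a compact metric space and $(x_n)_{n\in\mathbb{N}}$ a dense sequence in $X$. Then there is a coloring $c:[\mathbb{N}]^2\to2$ such that for every infinite $c$-homogeneous set $h\subseteq\mathbb{N}$ the subsequence $(x_n)_{n\in h}$ converges. Consequently the family $\mathcal{C}(x_n)_n=\{y\subseteq\mathbb{N}:(x_n)_{n\in y}\text{ is convergent}\}$ has a Borel selector.
   Context: A set $h$ is $c$-homogeneous if $c$ is constant on $[h]^2$. A Borel selector for a tall family $\mathcal{C}\subseteq2^{\mathbb{N}}$ is a Borel $S:2^{\mathbb{N}}\to2^{\mathbb{N}}$ with $S(x)\subseteq x$, $S(x)\in\mathcal{C}$, and $S(x)$ infinite whenever $x$ is infinite (subsets of $\mathbb{N}$ identified with elements of $2^{\mathbb{N}}$). *)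

theory Defs
  imports "HOL-Analysis.Analysis"
begin

text \<open>A colouring of [N]^2 into 2 colours: the colour of the pair {i,j} with i<j is c i j.\<close>
definition homogeneous :: "(nat \<Rightarrow> nat \<Rightarrow> bool) \<Rightarrow> nat set \<Rightarrow> bool" where
  "homogeneous c h \<longleftrightarrow> (\<exists>b. \<forall>i\<in>h. \<forall>j\<in>h. i < j \<longrightarrow> c i j = b)"

text \<open>The subsequence (x n) for n in y, enumerated increasingly, is convergent
  (finite index sets are counted as convergent by convention).\<close>
definition subseq_convergent :: "(nat \<Rightarrow> 'a::topological_space) \<Rightarrow> nat set \<Rightarrow> bool" where
  "subseq_convergent x y \<longleftrightarrow> finite y \<or> convergent (\<lambda>k. x (enumerate y k))"

definition conv_family :: "(nat \<Rightarrow> 'a::topological_space) \<Rightarrow> nat set set" where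
  "conv_family x = {y. subseq_convergent x y}"

text \<open>Borel selector; elements of 2^N are characteristic functions nat \<Rightarrow> bool with the
  product (Cantor) topology, subsets of N identified via Collect.\<close>
definition borel_selector :: "nat set set \<Rightarrow> ((nat \<Rightarrow> bool) \<Rightarrow> (nat \<Rightarrow> bool)) \<Rightarrow> bool" where
  "borel_selector C S \<longleftrightarrow> S \<in> borel \<rightarrow>\<^sub>M borel \<and>
     (\<forall>p. Collect (S p) \<subseteq> Collect p \<and> Collect (S p) \<in> C \<and>
          (infinite (Collect p) \<longrightarrow> infinite (Collect (S p))))"

end

theory Submission
  imports Defs
begin

instance bool :: second_countable_topology
proof
  show "\<exists>B::bool set set. countable B \<and> open = generate_topology B"
    by (intro exI[of _ "Pow UNIV"]) (auto simp: open_discrete fun_eq_iff intro: generate_topology.Basis)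
qed

lemma sets_borel_bool: "sets (borel :: bool measure) = sets (count_space UNIV)"
proof -
  have "\<And>A::bool set. open A" by (simp add: open_discrete)
  then show ?thesis by (auto simp: sets_borel intro: sigma_sets.Basic)
qed
lemma pred_borel_bool: "(f::'a\<Rightarrow>bool) \<in> M \<rightarrow>\<^sub>M count_space UNIV \<Longrightarrow> f \<in> borel_measurable M"
  using measurable_cong_sets[OF refl sets_borel_bool] by blast
lemma coord: "(\<lambda>p::nat\<Rightarrow>bool. p k) \<in> borel \<rightarrow>\<^sub>M count_space UNIV"
  using measurable_product_coordinates[where i=k] measurable_cong_sets[OF refl sets_borel_bool] by blast

definition pref :: "(nat \<Rightarrow> nat \<Rightarrow> nat) \<Rightarrow> nat \<Rightarrow> nat \<Rightarrow> nat list" where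
  "pref \<alpha> k m = map (\<alpha> k) [0..<m]"
definition pick :: "(nat \<Rightarrow> nat \<Rightarrow> nat) \<Rightarrow> (nat \<Rightarrow> bool) \<Rightarrow> nat list \<Rightarrow> nat" where
  "pick \<alpha> p \<sigma> = (LEAST d. \<forall>n. \<exists>k>n. p k \<and> pref \<alpha> k (Suc (length \<sigma>)) = \<sigma> @ [d])"
primrec Dl :: "(nat \<Rightarrow> nat \<Rightarrow> nat) \<Rightarrow> (nat \<Rightarrow> bool) \<Rightarrow> nat \<Rightarrow> nat list" where
  "Dl \<alpha> p 0 = []"
| "Dl \<alpha> p (Suc m) = Dl \<alpha> p m @ [pick \<alpha> p (Dl \<alpha> p m)]"
definition Ssel :: "(nat \<Rightarrow> nat \<Rightarrow> nat) \<Rightarrow> (nat \<Rightarrow> bool) \<Rightarrow> nat \<Rightarrow> bool" where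
  "Ssel \<alpha> p k = (p k \<and> (\<forall>j<k. p j \<longrightarrow> (\<exists>m. pref \<alpha> k m = Dl \<alpha> p m \<and> (j < m \<or> pref \<alpha> j m \<noteq> Dl \<alpha> p m))))"

lemma pick_meas: "(\<lambda>p. pick \<alpha> p \<sigma>) \<in> borel \<rightarrow>\<^sub>M count_space UNIV"
  unfolding pick_def using coord by measurable

lemma Dl_meas: "(\<lambda>p. Dl \<alpha> p m) \<in> borel \<rightarrow>\<^sub>M count_space UNIV"
proof (induction m)
  case 0 then show ?case by simp
next
  case (Suc m)
  have "(\<lambda>p. (\<lambda>\<sigma> p. \<sigma> @ [pick \<alpha> p \<sigma>]) (Dl \<alpha> p m) p) \<in> borel \<rightarrow>\<^sub>M count_space UNIV"
    apply (rule measurable_compose_countable[OF _ Suc])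
    using pick_meas by measurable
  then show ?case by simp
qed

lemma Ssel_meas: "Ssel \<alpha> \<in> borel \<rightarrow>\<^sub>M borel"
proof (rule measurable_coordinatewise_then_product)
  fix k
  have [measurable]: "\<And>m. (\<lambda>p. Dl \<alpha> p m) \<in> borel \<rightarrow>\<^sub>M count_space UNIV" by (rule Dl_meas)
  have [measurable]: "\<And>k. (\<lambda>p::nat\<Rightarrow>bool. p k) \<in> borel \<rightarrow>\<^sub>M count_space UNIV" by (rule coord)
  have "(\<lambda>p. Ssel \<alpha> p k) \<in> borel \<rightarrow>\<^sub>M count_space UNIV"
    unfolding Ssel_def by measurable
  then show "(\<lambda>p. Ssel \<alpha> p k) \<in> borel_measurable borel" by (rule pred_borel_bool)
qed

lemma pref_Suc: "pref \<alpha> k (Suc m) = pref \<alpha> k m @ [\<alpha> k m]"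
  by (simp add: pref_def)
lemma length_pref[simp]: "length (pref \<alpha> k m) = m" by (simp add: pref_def)
lemma length_Dl[simp]: "length (Dl \<alpha> p m) = m" by (induction m) auto
lemma take_pref: "m \<le> m' \<Longrightarrow> take m (pref \<alpha> k m') = pref \<alpha> k m"
  by (simp add: pref_def take_map)
lemma take_Dl: "m \<le> m' \<Longrightarrow> take m (Dl \<alpha> p m') = Dl \<alpha> p m"
proof (induction m')
  case 0 then show ?case by simp
next
  case (Suc m')
  show ?case
  proof (cases "m = Suc m'")
    case True then show ?thesis by (metis length_Dl take_all order_refl)
  next
    case False then have "m \<le> m'" using Suc.prems by simp
    then show ?thesis using Suc.IH by simp
  qed
qed
lemma agree_mono: "pref \<alpha> k m' = Dl \<alpha> p m' \<Longrightarrow> m \<le> m' \<Longrightarrow> pref \<alpha> k m = Dl \<alpha> p m"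
  by (metis take_pref take_Dl)

lemma good:
  assumes bnd: "\<And>k m. \<alpha> k m < N m" and inf: "infinite (Collect p)"
  shows "infinite {k. p k \<and> pref \<alpha> k m = Dl \<alpha> p m}"
proof (induction m)
  case 0 then show ?case using inf by (simp add: pref_def)
next
  case (Suc m)
  define \<sigma> where "\<sigma> = Dl \<alpha> p m"
  define B where "B d = {k. p k \<and> pref \<alpha> k (Suc m) = \<sigma> @ [d]}" for d
  have sub: "{k. p k \<and> pref \<alpha> k m = \<sigma>} \<subseteq> (\<Union>d<N m. B d)"
    using bnd by (auto simp: B_def pref_Suc)
  have "\<exists>d. infinite (B d)"
  proof (rule ccontr)
    assume "\<not> ?thesis"
    then have "finite (\<Union>d<N m. B d)" by auto
    then show False using Suc.IH sub finite_subset unfolding \<sigma>_def by blast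
  qed
  then have ex: "\<exists>d. \<forall>n. \<exists>k>n. p k \<and> pref \<alpha> k (Suc (length \<sigma>)) = \<sigma> @ [d]"
    by (auto simp: B_def \<sigma>_def infinite_nat_iff_unbounded)
  have "\<forall>n. \<exists>k>n. p k \<and> pref \<alpha> k (Suc (length \<sigma>)) = \<sigma> @ [pick \<alpha> p \<sigma>]"
    unfolding pick_def by (rule LeastI_ex[OF ex])
  then show ?case by (simp add: \<sigma>_def infinite_nat_iff_unbounded)
qed

lemma Ssel_inf:
  assumes bnd: "\<And>k m. \<alpha> k m < N m" and inf: "infinite (Collect p)"
  shows "infinite (Collect (Ssel \<alpha> p))"
  unfolding infinite_nat_iff_unbounded
proof
  fix n
  define G where "G = {k. p k \<and> pref \<alpha> k (Suc n) = Dl \<alpha> p (Suc n)}"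
  have "infinite G" unfolding G_def by (rule good[OF bnd inf])
  then have ex: "\<exists>k. k > n \<and> k \<in> G" by (simp add: infinite_nat_iff_unbounded)
  define k0 where "k0 = (LEAST k. k > n \<and> k \<in> G)"
  have k0: "k0 > n \<and> k0 \<in> G" unfolding k0_def by (rule LeastI_ex[OF ex])
  have "Ssel \<alpha> p k0"
    unfolding Ssel_def
  proof (intro conjI allI impI)
    show "p k0" using k0 by (simp add: G_def)
    fix j assume j: "j < k0" "p j"
    show "\<exists>m. pref \<alpha> k0 m = Dl \<alpha> p m \<and> (j < m \<or> pref \<alpha> j m \<noteq> Dl \<alpha> p m)"
    proof (cases "j \<le> n")
      case True then show ?thesis using k0 by (intro exI[of _ "Suc n"]) (simp add: G_def)
    next
      case False
      then have "j \<notin> G" using not_less_Least[of j "\<lambda>k. k > n \<and> k \<in> G"] j k0_def by auto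
      then show ?thesis using k0 j by (intro exI[of _ "Suc n"]) (simp add: G_def)
    qed
  qed
  then show "\<exists>k>n. k \<in> Collect (Ssel \<alpha> p)" using k0 by auto
qed

lemma Ssel_agree:
  assumes inf: "infinite (Collect (Ssel \<alpha> p))"
  defines "e \<equiv> enumerate (Collect (Ssel \<alpha> p))"
  shows "\<exists>i0. \<forall>i\<ge>i0. pref \<alpha> (e i) m = Dl \<alpha> p m"
proof (induction m)
  case 0 then show ?case by (simp add: pref_def)
next
  case (Suc m)
  then obtain i0 where i0: "\<And>i. i \<ge> i0 \<Longrightarrow> pref \<alpha> (e i) m = Dl \<alpha> p m" by blast
  have "pref \<alpha> (e i) (Suc m) = Dl \<alpha> p (Suc m)" if ige: "i \<ge> Suc (i0 + m)" for i
  proof -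
    obtain j where ij: "i = Suc j" using ige by (cases i) auto
    have jge: "j \<ge> i0" "j \<ge> m" using ige ij by auto
    have ej: "e j \<ge> j" unfolding e_def using le_enumerate[OF inf] by blast
    have lt: "e j < e i" unfolding e_def ij using enumerate_step[OF inf] by blast
    have "Ssel \<alpha> p (e i)" "Ssel \<alpha> p (e j)" unfolding e_def using enumerate_in_set[OF inf] by auto
    then obtain m' where m': "pref \<alpha> (e i) m' = Dl \<alpha> p m'" "e j < m' \<or> pref \<alpha> (e j) m' \<noteq> Dl \<alpha> p m'"
      using lt unfolding Ssel_def by blast
    have "m' \<ge> Suc m"
    proof (cases "e j < m'")
      case True then show ?thesis using ej jge by linarith
    next
      case False
      then have ne: "pref \<alpha> (e j) m' \<noteq> Dl \<alpha> p m'" using m' by blast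
      show ?thesis
      proof (rule ccontr)
        assume "\<not> ?thesis" then have "m' \<le> m" by simp
        then have "pref \<alpha> (e j) m' = Dl \<alpha> p m'" using agree_mono i0[OF jge(1)] by blast
        then show False using ne by blast
      qed
    qed
    then show ?thesis using agree_mono m'(1) by blast
  qed
  then show ?case by blast
qed

lemma dec_stab:
  fixes w :: "nat \<Rightarrow> nat"
  assumes "\<And>i. w (Suc i) \<le> w i"
  shows "\<exists>i1. \<forall>i\<ge>i1. w i = w i1"
proof -
  define \<mu> where "\<mu> = (LEAST y. y \<in> range w)"
  have "\<mu> \<in> range w" unfolding \<mu>_def by (rule LeastI[of _ "w 0"]) simp
  then obtain i1 where i1: "w i1 = \<mu>" by auto
  have "w i = w i1" if "i \<ge> i1" for i
  proof -
    have "w i \<le> w i1" using lift_Suc_antimono_le[of w, OF assms that] .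
    moreover have "\<mu> \<le> w i" unfolding \<mu>_def by (rule Least_le) simp
    ultimately show ?thesis using i1 by simp
  qed
  then show ?thesis by blast
qed

definition lexc :: "(nat \<Rightarrow> nat \<Rightarrow> nat) \<Rightarrow> nat \<Rightarrow> nat \<Rightarrow> bool" where
  "lexc \<alpha> i j = (\<exists>m. (\<forall>k<m. \<alpha> i k = \<alpha> j k) \<and> \<alpha> i m < \<alpha> j m)"

lemma lex_stab:
  assumes bnd: "\<And>k m. \<alpha> k m < N m"
    and hom: "\<And>i. lexc \<alpha> (e i) (e (Suc i)) = b"
  shows "\<exists>i0. \<forall>i\<ge>i0. \<forall>k<m. \<alpha> (e i) k = \<alpha> (e i0) k"
proof (induction m)
  case 0 then show ?case by simp
next
  case (Suc m)
  then obtain i0 where i0: "\<And>i k. i \<ge> i0 \<Longrightarrow> k < m \<Longrightarrow> \<alpha> (e i) k = \<alpha> (e i0) k" by blast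
  have pre: "\<forall>k<m. \<alpha> (e i) k = \<alpha> (e (Suc i)) k" if "i \<ge> i0" for i
    using i0[of i] i0[of "Suc i"] that by simp
  define v where "v i = \<alpha> (e (i0 + i)) m" for i
  have step: "if b then v i \<le> v (Suc i) else v (Suc i) \<le> v i" for i
  proof -
    have pi: "\<forall>k<m. \<alpha> (e (i0+i)) k = \<alpha> (e (Suc (i0+i))) k" using pre[of "i0+i"] by simp
    have h: "lexc \<alpha> (e (i0+i)) (e (Suc (i0+i))) = b" by (rule hom)
    show ?thesis
    proof (cases b)
      case True
      then obtain m' where m': "\<forall>k<m'. \<alpha> (e (i0+i)) k = \<alpha> (e (Suc (i0+i))) k"
          "\<alpha> (e (i0+i)) m' < \<alpha> (e (Suc (i0+i))) m'" using h unfolding lexc_def by blast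
      have "\<alpha> (e (i0+i)) m \<le> \<alpha> (e (Suc (i0+i))) m"
      proof (cases rule: linorder_cases[of m' m])
        case less
        then have "\<alpha> (e (i0+i)) m' = \<alpha> (e (Suc (i0+i))) m'" using pi by blast
        then show ?thesis using m'(2) by simp
      next
        case equal then show ?thesis using m'(2) by simp
      next
        case greater
        then have "\<alpha> (e (i0+i)) m = \<alpha> (e (Suc (i0+i))) m" using m'(1) by blast
        then show ?thesis by simp
      qed
      then show ?thesis using True by (simp add: v_def)
    next
      case False
      have "\<not> (\<alpha> (e (i0+i)) m < \<alpha> (e (Suc (i0+i))) m)"
      proof
        assume "\<alpha> (e (i0+i)) m < \<alpha> (e (Suc (i0+i))) m"
        then have "lexc \<alpha> (e (i0+i)) (e (Suc (i0+i)))" unfolding lexc_def using pi by blast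
        then show False using h False by simp
      qed
      then show ?thesis using False unfolding v_def by simp
    qed
  qed
  obtain i1 where i1: "\<And>i. i \<ge> i1 \<Longrightarrow> v i = v i1"
  proof (cases b)
    case True
    define w where "w i = N m - v i" for i
    have "w (Suc i) \<le> w i" for i using step[of i] True unfolding w_def by (simp add: diff_le_mono2)
    then obtain i1 where wi: "\<forall>i\<ge>i1. w i = w i1" using dec_stab[of w] by blast
    have vlt: "v i < N m" for i unfolding v_def by (rule bnd)
    have "\<forall>i\<ge>i1. v i = v i1"
    proof (intro allI impI)
      fix i assume "i \<ge> i1"
      then have "w i = w i1" using wi by blast
      then have "N m - v i = N m - v i1" unfolding w_def .
      then show "v i = v i1" using vlt[of i] vlt[of i1] by arith
    qed
    then show ?thesis using that by blast
  next
    case False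
    have "v (Suc i) \<le> v i" for i using step[of i] False by simp
    then obtain i1 where "\<forall>i\<ge>i1. v i = v i1" using dec_stab[of v] by blast
    then show ?thesis using that by blast
  qed
  have "\<forall>i\<ge>i0+i1. \<forall>k<Suc m. \<alpha> (e i) k = \<alpha> (e (i0+i1)) k"
  proof (intro allI impI)
    fix i k assume "i \<ge> i0 + i1" "k < Suc m"
    show "\<alpha> (e i) k = \<alpha> (e (i0+i1)) k"
    proof (cases "k < m")
      case True
      have "i \<ge> i0" "i0 + i1 \<ge> i0" using \<open>i \<ge> i0 + i1\<close> by auto
      then show ?thesis using i0[of i k] i0[of "i0+i1" k] True by simp
    next
      case False then have "k = m" using \<open>k < Suc m\<close> by simp
      have "i - i0 \<ge> i1" using \<open>i \<ge> i0 + i1\<close> by simp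
      then have "v (i - i0) = v i1" by (rule i1)
      then show ?thesis using \<open>k = m\<close> \<open>i \<ge> i0 + i1\<close> unfolding v_def by simp
    qed
  qed
  then show ?case by blast
qed

lemma cauchy_digits:
  fixes x :: "nat \<Rightarrow> 'a::metric_space"
  assumes close: "\<And>k k' m. \<alpha> k m = \<alpha> k' m \<Longrightarrow> dist (x k) (x k') < 2 / real (Suc m)"
    and stab: "\<And>m. \<exists>i0 c. \<forall>i\<ge>i0. \<alpha> (e i) m = c"
  shows "Cauchy (\<lambda>i. x (e i))"
proof (rule metric_CauchyI)
  fix \<epsilon> :: real assume "\<epsilon> > 0"
  obtain m :: nat where m: "2 / \<epsilon> < real m" using reals_Archimedean2 by blast
  have "2 / real (Suc m) < \<epsilon>"
    using m \<open>\<epsilon> > 0\<close> by (simp add: divide_less_eq mult.commute pos_divide_less_eq distrib_left)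
  obtain i0 c where i0: "\<And>i. i \<ge> i0 \<Longrightarrow> \<alpha> (e i) m = c" using stab by blast
  have "\<forall>a\<ge>i0. \<forall>b\<ge>i0. dist (x (e a)) (x (e b)) < \<epsilon>"
  proof (intro allI impI)
    fix a b assume "a \<ge> i0" "b \<ge> i0"
    then have "\<alpha> (e a) m = \<alpha> (e b) m" using i0 by simp
    then have "dist (x (e a)) (x (e b)) < 2 / real (Suc m)" by (rule close)
    then show "dist (x (e a)) (x (e b)) < \<epsilon>" using \<open>2 / real (Suc m) < \<epsilon>\<close> by linarith
  qed
  then show "\<exists>M. \<forall>a\<ge>M. \<forall>b\<ge>M. dist (x (e a)) (x (e b)) < \<epsilon>" by blast
qed

lemma digits:
  fixes X :: "'a::metric_space set" and x :: "nat \<Rightarrow> 'a"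
  assumes "compact X" and "range x \<subseteq> X"
  shows "\<exists>(\<alpha>::nat\<Rightarrow>nat\<Rightarrow>nat) N. (\<forall>k m. \<alpha> k m < N m) \<and>
     (\<forall>k k' m. \<alpha> k m = \<alpha> k' m \<longrightarrow> dist (x k) (x k') < 2 / real (Suc m))"
proof -
  have tb: "\<forall>\<epsilon>>0. \<exists>k. finite k \<and> k \<subseteq> X \<and> X \<subseteq> (\<Union>x\<in>k. ball x \<epsilon>)"
    using seq_compact_imp_totally_bounded compact_imp_seq_compact assms(1) by blast
  have "\<forall>m::nat. \<exists>K. finite K \<and> X \<subseteq> (\<Union>y\<in>K. ball y (1 / real (Suc m)))"
  proof
    fix m :: nat
    have "1 / real (Suc m) > 0" by simp
    then show "\<exists>K. finite K \<and> X \<subseteq> (\<Union>y\<in>K. ball y (1 / real (Suc m)))" using tb by blast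
  qed
  then have "\<exists>K. \<forall>m::nat. finite (K m) \<and> X \<subseteq> (\<Union>y\<in>K m. ball y (1 / real (Suc m)))"
    by (rule choice)
  then obtain K where K0: "\<forall>m::nat. finite (K m) \<and> X \<subseteq> (\<Union>y\<in>K m. ball y (1 / real (Suc m)))" by blast
  then have K: "\<And>m. finite (K m)" "\<And>m. X \<subseteq> (\<Union>y\<in>K m. ball y (1 / real (Suc m)))" by auto
  define L where "L m = (SOME xs. set xs = K m)" for m
  have L: "set (L m) = K m" for m unfolding L_def by (rule someI_ex) (rule finite_list[OF K(1)])
  define r where "r m = 1 / real (Suc m)" for m
  define \<alpha> where "\<alpha> k m = (LEAST i. i < length (L m) \<and> dist (L m ! i) (x k) < r m)" for k m
  have ex: "\<exists>i. i < length (L m) \<and> dist (L m ! i) (x k) < r m" for k m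
  proof -
    have "x k \<in> X" using assms(2) by auto
    then obtain y where "y \<in> K m" "dist y (x k) < r m" using K(2)[of m] by (auto simp: r_def)
    then show ?thesis using L by (metis in_set_conv_nth)
  qed
  have a: "\<alpha> k m < length (L m) \<and> dist (L m ! \<alpha> k m) (x k) < r m" for k m
    unfolding \<alpha>_def by (rule LeastI_ex[OF ex])
  have "dist (x k) (x k') < 2 / real (Suc m)" if "\<alpha> k m = \<alpha> k' m" for k k' m
  proof -
    have "dist (x k) (x k') \<le> dist (L m ! \<alpha> k m) (x k) + dist (L m ! \<alpha> k m) (x k')"
      by (rule dist_triangle3)
    also have "\<dots> < r m + r m" using a[of k m] a[of k' m] that by (intro add_strict_mono) auto
    finally show ?thesis by (simp add: r_def)
  qed
  then show ?thesis using a by (intro exI[of _ \<alpha>] exI[of _ "\<lambda>m. length (L m)"]) blast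
qed

lemma cauchy_conv:
  fixes X :: "'a::metric_space set"
  assumes "compact X" "range x \<subseteq> X" "Cauchy (\<lambda>i. x (e i))"
  shows "convergent (\<lambda>i. x (e i))"
proof -
  have "complete X" by (rule compact_imp_complete[OF assms(1)])
  then obtain l where "l \<in> X" "(\<lambda>i. x (e i)) \<longlonglongrightarrow> l"
    using assms(2,3) by (auto elim!: completeE)
  then show ?thesis by (auto simp: convergent_def)
qed

theorem mainTheorem17:
  fixes X :: "'a::metric_space set" and x :: "nat \<Rightarrow> 'a"
  assumes "compact X" and "range x \<subseteq> X" and "X \<subseteq> closure (range x)"
  shows "(\<exists>c :: nat \<Rightarrow> nat \<Rightarrow> bool. \<forall>h. infinite h \<and> homogeneous c h \<longrightarrow>
            convergent (\<lambda>k. x (enumerate h k)))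
         \<and> (\<exists>S. borel_selector (conv_family x) S)"
proof -
  obtain \<alpha> :: "nat\<Rightarrow>nat\<Rightarrow>nat" and N where bnd: "\<And>k m. \<alpha> k m < N m"
    and close: "\<And>k k' m. \<alpha> k m = \<alpha> k' m \<Longrightarrow> dist (x k) (x k') < 2 / real (Suc m)"
    using digits[OF assms(1,2)] by blast
  have P1: "\<forall>h. infinite h \<and> homogeneous (lexc \<alpha>) h \<longrightarrow> convergent (\<lambda>k. x (enumerate h k))"
  proof (intro allI impI)
    fix h assume h: "infinite h \<and> homogeneous (lexc \<alpha>) h"
    then obtain b where b: "\<forall>i\<in>h. \<forall>j\<in>h. i < j \<longrightarrow> lexc \<alpha> i j = b"
      unfolding homogeneous_def by blast
    define e where "e = enumerate h"
    have hin: "e i \<in> h" for i unfolding e_def using h by (simp add: enumerate_in_set)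
    have hlt: "e i < e (Suc i)" for i unfolding e_def using h by (simp add: enumerate_step)
    have hom: "lexc \<alpha> (e i) (e (Suc i)) = b" for i
      using b hin[of i] hin[of "Suc i"] hlt[of i] by blast
    have stab: "\<exists>i0 c. \<forall>i\<ge>i0. \<alpha> (e i) m = c" for m
    proof -
      obtain i0 where i0: "\<forall>i\<ge>i0. \<forall>k<Suc m. \<alpha> (e i) k = \<alpha> (e i0) k"
        using lex_stab[of \<alpha> N e b "Suc m", OF bnd hom] by blast
      have "\<forall>i\<ge>i0. \<alpha> (e i) m = \<alpha> (e i0) m"
      proof (intro allI impI)
        fix i assume "i \<ge> i0"
        then show "\<alpha> (e i) m = \<alpha> (e i0) m" using i0 lessI by blast
      qed
      then show ?thesis by blast
    qed
    have "Cauchy (\<lambda>i. x (e i))" by (rule cauchy_digits[where \<alpha>=\<alpha> and x=x and e=e, OF close stab])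
    then have "convergent (\<lambda>i. x (e i))" by (rule cauchy_conv[OF assms(1,2)])
    then show "convergent (\<lambda>k. x (enumerate h k))" by (simp add: e_def)
  qed
  have P2: "borel_selector (conv_family x) (Ssel \<alpha>)"
    unfolding borel_selector_def
  proof (intro conjI allI impI)
    show "Ssel \<alpha> \<in> borel \<rightarrow>\<^sub>M borel" by (rule Ssel_meas)
    fix p
    show "Collect (Ssel \<alpha> p) \<subseteq> Collect p" unfolding Ssel_def by blast
    show "Collect (Ssel \<alpha> p) \<in> conv_family x"
      unfolding conv_family_def subseq_convergent_def
    proof (cases "finite (Collect (Ssel \<alpha> p))")
      case False
      define e where "e = enumerate (Collect (Ssel \<alpha> p))"
      have stab: "\<exists>i0 c. \<forall>i\<ge>i0. \<alpha> (e i) m = c" for m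
      proof -
        obtain i0 where i0: "\<forall>i\<ge>i0. pref \<alpha> (e i) (Suc m) = Dl \<alpha> p (Suc m)"
          using Ssel_agree[OF False] unfolding e_def by blast
        have "\<forall>i\<ge>i0. \<alpha> (e i) m = Dl \<alpha> p (Suc m) ! m"
        proof (intro allI impI)
          fix i assume "i \<ge> i0"
          with i0 have eq: "pref \<alpha> (e i) (Suc m) = Dl \<alpha> p (Suc m)" by blast
          have "\<alpha> (e i) m = pref \<alpha> (e i) (Suc m) ! m" by (simp add: pref_Suc nth_append)
          also have "\<dots> = Dl \<alpha> p (Suc m) ! m" using eq by (rule arg_cong[where f="\<lambda>l. l ! m"])
          finally show "\<alpha> (e i) m = Dl \<alpha> p (Suc m) ! m" .
        qed
        then show ?thesis by blast
      qed
      have "Cauchy (\<lambda>i. x (e i))" by (rule cauchy_digits[where \<alpha>=\<alpha> and x=x and e=e, OF close stab])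
      then have "convergent (\<lambda>i. x (e i))" by (rule cauchy_conv[OF assms(1,2)])
      then show "Collect (Ssel \<alpha> p) \<in> {y. finite y \<or> convergent (\<lambda>k. x (enumerate y k))}"
        by (simp add: e_def)
    qed simp
    assume "infinite (Collect p)"
    then show "infinite (Collect (Ssel \<alpha> p))" by (rule Ssel_inf[OF bnd])
  qed
  show ?thesis using P1 P2 by blast
qed
end
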